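(* Let $\varphi=\frac{1+\sqrt5}{2}$ and $\theta_0=(\theta_1,\theta_2,\theta_3)=\left(\frac12,\frac1\varphi,\frac1{\varphi^2}\right)$. Let $m=(0,y,z)$ be a point of the face $X=0$ of the unit cube with well defined orbit, identified with $(y,z)\in\mathbb T^2=(\mathbb R/\mathbb Z)^2$. Then for every $k\ge 0$, the $(k+1)$-th return word of $a$ in the billiard word $u=f_{\theta_0}(m)$ is $\Phi\big(m+2k\theta_2(1,-1)\bmod 1\big)$.
   Context: $f_{\theta_0}(m)\in\{a,b,c\}^{\mathbb N}$ records, in order, the successive intersections of the half line $m+\mathbb R_+\theta_0$ with the planes $X=n$ (letter $a$), $Y=n$ (letter $b$), $Z=n$ (letter $c$), $n\in\mathbb Z$; for $m$ on the face $X=0$ it begins with $a$. The $j$-th return word of $a$ in $u$ is the factor of $u$ starting at the $j$-th occurrence of $a$ and ending just before the $(j+1)$-th occurrence of $a$. The face $X=0$ (identified with $\mathbb T^2$ via $(y,z)$) is partitioned, up to boundaries, into seven sets, for $(y,z)\in[0,1)^2$: $P_{a_7}$: $y<4-2\varphi,\ z<2\varphi-3$; $P_{a_4}$: $y>4-2\varphi,\ z<2\varphi-3$; $P_{a_2}$: $y<4-2\varphi,\ 2\varphi-3<z<(2-\varphi)+y/\varphi$; $P_{a_1}$: $y<4-2\varphi,\ z>(2-\varphi)+y/\varphi$; $P_{a_5}$: $y>4-2\varphi,\ 2\varphi-3<z<(3-2\varphi)+y/\varphi$; $P_{a_3}$: $y>4-2\varphi,\ (3-2\varphi)+y/\varphi<z<(2-\varphi)+y/\varphi$;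 $P_{a_6}$: $y>4-2\varphi,\ z>(2-\varphi)+y/\varphi$. For a point $q$ of the face, $\Phi(q):=\Phi(a_i)$ where $q\in P_{a_i}$, with $\Phi(a_1)=acb$, $\Phi(a_2)=abc$, $\Phi(a_3)=abcb$, $\Phi(a_4)=abb$, $\Phi(a_5)=abbc$, $\Phi(a_6)=acbb$, $\Phi(a_7)=ab$ (this is the first return word of $a$ in $f_{\theta_0}(q)$). *)

theory Defs
  imports Complex_Main
begin

datatype letter = a | b | c

definition phi :: real where "phi = (1 + sqrt 5) / 2"

definition theta1 :: real where "theta1 = 1 / 2"
definition theta2 :: real where "theta2 = 1 / phi"
definition theta3 :: real where "theta3 = 1 / phi ^ 2"

definition theta0 :: "real \<times> real \<times> real" where
  "theta0 = (theta1, theta2, theta3)"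

definition coordX :: "real \<times> real \<times> real \<Rightarrow> real \<times> real \<times> real \<Rightarrow> real \<Rightarrow> real" where
  "coordX \<theta> m t = fst m + t * fst \<theta>"
definition coordY :: "real \<times> real \<times> real \<Rightarrow> real \<times> real \<times> real \<Rightarrow> real \<Rightarrow> real" where
  "coordY \<theta> m t = fst (snd m) + t * fst (snd \<theta>)"
definition coordZ :: "real \<times> real \<times> real \<Rightarrow> real \<times> real \<times> real \<Rightarrow> real \<Rightarrow> real" where
  "coordZ \<theta> m t = snd (snd m) + t * snd (snd \<theta>)"

definition hit_times :: "real \<times> real \<times> real \<Rightarrow> real \<times> real \<times> real \<Rightarrow> real set" where
  "hit_times \<theta> m = {t. 0 \<le> t \<and> (coordX \<theta> m t \<in> \<int> \<or> coordY \<theta> m t \<in> \<int> \<or> coordZ \<theta> m t \<in> \<int>)}"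

definition well_defined_orbit :: "real \<times> real \<times> real \<Rightarrow> real \<times> real \<times> real \<Rightarrow> bool" where
  "well_defined_orbit \<theta> m \<longleftrightarrow>
     (\<forall>t\<ge>0. \<not> (coordX \<theta> m t \<in> \<int> \<and> coordY \<theta> m t \<in> \<int>) \<and>
             \<not> (coordX \<theta> m t \<in> \<int> \<and> coordZ \<theta> m t \<in> \<int>) \<and>
             \<not> (coordY \<theta> m t \<in> \<int> \<and> coordZ \<theta> m t \<in> \<int>))"

definition nth_hit :: "real \<times> real \<times> real \<Rightarrow> real \<times> real \<times> real \<Rightarrow> nat \<Rightarrow> real" where
  "nth_hit \<theta> m n = (THE t. t \<in> hit_times \<theta> m \<and> card {s \<in> hit_times \<theta> m. s < t} = n)"

definition letter_at :: "real \<times> real \<times> real \<Rightarrow> real \<times> real \<times> real \<Rightarrow> real \<Rightarrow> letter" where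
  "letter_at \<theta> m t = (if coordX \<theta> m t \<in> \<int> then a else if coordY \<theta> m t \<in> \<int> then b else c)"

definition billiard_word :: "real \<times> real \<times> real \<Rightarrow> real \<times> real \<times> real \<Rightarrow> nat \<Rightarrow> letter" where
  "billiard_word \<theta> m n = letter_at \<theta> m (nth_hit \<theta> m n)"

text \<open>Position of the (j+1)-th occurrence (0-indexed j) of letter x in u.\<close>
definition occ :: "(nat \<Rightarrow> letter) \<Rightarrow> letter \<Rightarrow> nat \<Rightarrow> nat" where
  "occ u x j = (THE p. u p = x \<and> card {q. q < p \<and> u q = x} = j)"

text \<open>The j-th return word (j \<ge> 1) of x in u: factor from the j-th occurrence of x
  up to (excluding) the (j+1)-th occurrence.\<close>
definition return_word :: "(nat \<Rightarrow> letter) \<Rightarrow> letter \<Rightarrow> nat \<Rightarrow> letter list" where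
  "return_word u x j = map u [occ u x (j - 1) ..< occ u x j]"

text \<open>The map Phi on the face X = 0, (y,z) \<in> [0,1)^2, via the partition P_{a_1},...,P_{a_7}
  (defined up to boundaries; on boundaries an arbitrary value [] is used).\<close>
definition Phi :: "real \<Rightarrow> real \<Rightarrow> letter list" where
  "Phi y z =
    (if y < 4 - 2*phi \<and> z < 2*phi - 3 then [a,b]
     else if y > 4 - 2*phi \<and> z < 2*phi - 3 then [a,b,b]
     else if y < 4 - 2*phi \<and> 2*phi - 3 < z \<and> z < (2 - phi) + y/phi then [a,b,c]
     else if y < 4 - 2*phi \<and> z > (2 - phi) + y/phi then [a,c,b]
     else if y > 4 - 2*phi \<and> 2*phi - 3 < z \<and> z < (3 - 2*phi) + y/phi then [a,b,b,c]
     else if y > 4 - 2*phi \<and> (3 - 2*phi) + y/phi < z \<and> z < (2 - phi) + y/phi then [a,b,c,b]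
     else if y > 4 - 2*phi \<and> z > (2 - phi) + y/phi then [a,c,b,b]
     else [])"

end

theory Submission
  imports Defs
begin


lemma sqrt5_bounds: "2 < sqrt (5::real)" "sqrt (5::real) < 3"
proof -
  show "2 < sqrt (5::real)" by (rule real_less_rsqrt) simp
  show "sqrt (5::real) < 3" by (rule real_less_lsqrt) auto
qed

lemma phi_sq: "phi * phi = phi + 1"
  unfolding phi_def by (simp add: field_simps)

lemma phi_bounds: "3/2 < phi" "phi < 2"
  using sqrt5_bounds unfolding phi_def by auto

lemma theta2_eq: "theta2 = phi - 1"
proof -
  have "phi * (phi - 1) = 1" using phi_sq by (simp add: algebra_simps)
  then show ?thesis unfolding theta2_def using phi_bounds
    by (simp add: field_simps)
qed

lemma theta3_eq: "theta3 = 2 - phi"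
proof -
  have "phi^2 * (2 - phi) = 1" using phi_sq by (simp add: algebra_simps power2_eq_square) 
  then show ?thesis unfolding theta3_def using phi_bounds
    by (simp add: field_simps)
qed

lemma card_lt_mono:
  fixes H :: "real set"
  assumes fin: "\<And>T. finite {s\<in>H. s<T}" and "t \<in> H" "t < t'"
  shows "card {s\<in>H. s<t} < card {s\<in>H. s<t'}"
  apply (rule psubset_card_mono[OF fin])
  using assms by auto

lemma card_le_mono':
  fixes H :: "real set"
  assumes fin: "\<And>T. finite {s\<in>H. s<T}" and "t \<le> t'"
  shows "card {s\<in>H. s<t} \<le> card {s\<in>H. s<t'}"
  apply (rule card_mono[OF fin])
  using assms by auto

lemma the_hit:
  fixes H :: "real set"
  assumes fin: "\<And>T. finite {s\<in>H. s<T}" and t0: "t0 \<in> H"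
  shows "(THE t. t \<in> H \<and> card {s\<in>H. s<t} = card {s\<in>H. s<t0}) = t0"
proof (rule the_equality)
  fix t assume "t \<in> H \<and> card {s\<in>H. s<t} = card {s\<in>H. s<t0}"
  then have h: "t \<in> H" "card {s\<in>H. s<t} = card {s\<in>H. s<t0}" by auto
  show "t = t0"
  proof (rule ccontr)
    assume "t \<noteq> t0"
    then have "t < t0 \<or> t0 < t" by auto
    then show False
    proof
      assume "t < t0" then show False using card_lt_mono[OF fin h(1), of t0] h(2) by simp
    next
      assume "t0 < t" then show False using card_lt_mono[OF fin t0, of t] h(2) by simp
    qed
  qed
qed (use t0 in auto)

lemma hit_surj:
  fixes H :: "real set"
  assumes fin: "\<And>T. finite {s\<in>H. s<T}" and nn: "\<And>t. t \<in> H \<Longrightarrow> 0 \<le> t"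
    and z: "0 \<in> H" and unb: "\<And>t. \<exists>t'\<in>H. t < t'"
  shows "\<exists>t\<in>H. card {s\<in>H. s<t} = n"
proof (induction n)
  case 0
  have e: "{s\<in>H. s<0} = {}" using nn by force
  have "card {s\<in>H. s<0} = 0" unfolding e by simp
  then show ?case using z by blast
next
  case (Suc n)
  then obtain t where t: "t \<in> H" "card {s\<in>H. s<t} = n" by blast
  obtain t'' where t'': "t'' \<in> H" "t < t''" using unb by blast
  define S where "S = {s\<in>H. t < s \<and> s \<le> t''}"
  have finS: "finite S" using fin[of "t''+1"] unfolding S_def
    by (rule finite_subset[rotated]) auto
  have neS: "S \<noteq> {}" using t'' unfolding S_def by auto
  define t' where "t' = Min S"
  have t'S: "t' \<in> S" unfolding t'_def using finS neS by simp
  have minS: "\<And>s. s \<in> S \<Longrightarrow> t' \<le> s" unfolding t'_def using finS by simp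
  have eq: "{s\<in>H. s<t'} = insert t {s\<in>H. s<t}"
  proof (intro equalityI subsetI)
    fix s assume s: "s \<in> {s\<in>H. s<t'}"
    have "\<not> t < s"
    proof
      assume "t < s"
      then have "s \<in> S" using s t'S unfolding S_def by auto
      then show False using minS[of s] s by auto
    qed
    then show "s \<in> insert t {s\<in>H. s<t}" using s by auto
  next
    fix s assume "s \<in> insert t {s\<in>H. s<t}"
    then show "s \<in> {s\<in>H. s<t'}" using t'S t unfolding S_def by auto
  qed
  have "card {s\<in>H. s<t'} = Suc n" unfolding eq using fin[of t] t by simp
  moreover have "t' \<in> H" using t'S unfolding S_def by auto
  ultimately show ?case by blast
qed

lemma hit_segment:
  fixes H :: "real set" and ts :: "real list"
  assumes fin: "\<And>T. finite {s\<in>H. s<T}" and AB: "A \<le> B"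
    and sorted: "sorted_wrt (<) ts" and st: "set ts = {s\<in>H. A \<le> s \<and> s < B}"
  shows "card {s\<in>H. s<B} = card {s\<in>H. s<A} + length ts"
    and "\<And>i. i < length ts \<Longrightarrow> card {s\<in>H. s < ts!i} = card {s\<in>H. s<A} + i"
proof -
  have dist: "distinct ts" using sorted by (simp add: strict_sorted_iff)
  have e1: "{s\<in>H. s<B} = {s\<in>H. s<A} \<union> set ts" unfolding st using AB by auto
  have e2: "{s\<in>H. s<A} \<inter> set ts = {}" unfolding st by auto
  have "card ({s\<in>H. s<A} \<union> set ts) = card {s\<in>H. s<A} + card (set ts)"
    by (rule card_Un_disjoint[OF fin[of A] _ e2]) simp
  then show "card {s\<in>H. s<B} = card {s\<in>H. s<A} + length ts"
    unfolding e1 distinct_card[OF dist] .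
next
  fix i assume i: "i < length ts"
  have dist: "distinct ts" using sorted by (simp add: strict_sorted_iff)
  have tsi: "ts!i \<in> set ts" using i by simp
  have eq: "{s\<in>H. s < ts!i} = {s\<in>H. s<A} \<union> (nth ts ` {..<i})"
  proof (intro equalityI subsetI)
    fix s assume s: "s \<in> {s\<in>H. s < ts!i}"
    show "s \<in> {s\<in>H. s<A} \<union> (nth ts ` {..<i})"
    proof (cases "s < A")
      case False
      then have "s \<in> set ts" using s st tsi by auto
      then obtain j where j: "j < length ts" "s = ts!j" by (auto simp: in_set_conv_nth)
      have "j < i"
      proof (rule ccontr)
        assume "\<not> j < i"
        then have "i \<le> j" by simp
        then have "ts!i \<le> ts!j"
        proof (cases "i = j")
          case False
          then have "i < j" using \<open>i \<le> j\<close> by simp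
          then show ?thesis using sorted_wrt_nth_less[OF sorted _ j(1)] by fastforce
        qed simp
        then show False using s j by auto
      qed
      then show ?thesis using j by auto
    qed (use s in auto)
  next
    fix s assume "s \<in> {s\<in>H. s<A} \<union> (nth ts ` {..<i})"
    then show "s \<in> {s\<in>H. s < ts!i}"
    proof
      assume "s \<in> {s\<in>H. s<A}"
      moreover have "A \<le> ts!i" using tsi st by auto
      ultimately show ?thesis by auto
    next
      assume "s \<in> nth ts ` {..<i}"
      then obtain j where j: "j < i" "s = ts!j" by auto
      have "ts!j \<in> set ts" using j i by simp
      moreover have "ts!j < ts!i" using sorted_wrt_nth_less[OF sorted j(1) i] .
      ultimately show ?thesis using j st by auto
    qed
  qed
  have inj: "inj_on (nth ts) {..<i}" using dist i
    by (auto simp: inj_on_def nth_eq_iff_index_eq)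
  have "{s\<in>H. s<A} \<inter> (nth ts ` {..<i}) = {}"
  proof -
    have "nth ts ` {..<i} \<subseteq> set ts" using i by auto
    then show ?thesis using st by auto
  qed
  then have "card ({s\<in>H. s<A} \<union> (nth ts ` {..<i})) = card {s\<in>H. s<A} + card (nth ts ` {..<i})"
    by (intro card_Un_disjoint[OF fin[of A]]) simp_all
  then show "card {s\<in>H. s < ts!i} = card {s\<in>H. s<A} + i"
    unfolding eq card_image[OF inj] by simp
qed



lemma t1: "(p::real)*p = p+1 \<Longrightarrow> (1-z)*(p+1) - (1-y)*p = p^2*((2-p) + y*(p-1) - z)" by algebra
lemma t2: "(p::real)*p = p+1 \<Longrightarrow> (1-z)*(p+1) - (2-y)*p = p^2*((3-2*p) + y*(p-1) - z)" by algebra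
lemma t3: "(p::real)*p = p+1 \<Longrightarrow> (2-y)*p - 2 = p*((4-2*p) - y)" by algebra
lemma t4: "(p::real)*p = p+1 \<Longrightarrow> (1-z)*(p+1) - 2 = p^2*((2*p-3) - z)" by algebra
lemma t5: "(p::real)*p = p+1 \<Longrightarrow> y + ((1-y)*p)*(p-1) = 1" by algebra
lemma t5b: "(p::real)*p = p+1 \<Longrightarrow> y + ((2-y)*p)*(p-1) = 2" by algebra
lemma t5c: "(p::real)*p = p+1 \<Longrightarrow> z + ((1-z)*(p+1))*(2-p) = 1" by algebra
lemma t6: "(p::real)*p = p+1 \<Longrightarrow> r*(p-1) = w \<Longrightarrow> r = w*p" by algebra
lemma t7: "(p::real)*p = p+1 \<Longrightarrow> r*(2-p) = w \<Longrightarrow> r = w*(p+1)" by algebra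

lemma phi_pos: "0 < phi" using phi_bounds by simp

lemma Ints_add_int_iff: "(of_int n + x \<in> (\<int>::real set)) = (x \<in> \<int>)"
proof
  assume "of_int n + x \<in> \<int>"
  then have "(of_int n + x) - of_int n \<in> (\<int>::real set)" by (intro Ints_diff) auto
  then show "x \<in> \<int>" by simp
qed auto

lemma Yhit:
  fixes y' r :: real
  assumes "0 \<le> y'" "y' < 1" "0 \<le> r" "r < 2" "y' + r * (phi - 1) \<in> \<int>"
  shows "(r = 0 \<and> y' = 0) \<or> r = (1 - y') * phi \<or> r = (2 - y') * phi"
proof -
  obtain n where n: "y' + r * (phi - 1) = of_int n" using assms(5) by (auto elim: Ints_cases)
  have p1: "phi * (phi - 1) = 1" using phi_sq by (simp add: algebra_simps)
  have "0 \<le> r * (phi - 1)" using assms phi_bounds by simp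
  moreover have "r * (phi - 1) \<le> 2 * (phi - 1)" using assms phi_bounds
    by (intro mult_right_mono) auto
  ultimately have "(0::real) \<le> of_int n" "of_int n < (3::real)" unfolding n[symmetric]
    using assms(1,2) phi_bounds by (smt (verit))+
  then have "n = 0 \<or> n = 1 \<or> n = 2" by linarith
  moreover
  { assume "n = 0"
    then have h: "y' = 0" "r * (phi - 1) = 0" using n \<open>0 \<le> r * (phi - 1)\<close> assms by linarith+
    moreover have "phi - 1 \<noteq> 0" using phi_bounds by auto
    ultimately have "r = 0" by simp
    then have ?thesis using h by simp }
  moreover
  { assume "n = 1"
    then have "r * (phi - 1) = 1 - y'" using n by simp
    then have "r = (1 - y') * phi" by (rule t6[OF phi_sq])
    then have ?thesis by simp }
  moreover
  { assume "n = 2"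
    then have "r * (phi - 1) = 2 - y'" using n by simp
    then have "r = (2 - y') * phi" by (rule t6[OF phi_sq])
    then have ?thesis by simp }
  ultimately show ?thesis by blast
qed

lemma Zhit:
  fixes z' r :: real
  assumes "0 \<le> z'" "z' < 1" "0 \<le> r" "r < 2" "z' + r * (2 - phi) \<in> \<int>"
  shows "(r = 0 \<and> z' = 0) \<or> r = (1 - z') * (phi + 1)"
proof -
  obtain n where n: "z' + r * (2 - phi) = of_int n" using assms(5) by (auto elim: Ints_cases)
  have p1: "(phi + 1) * (2 - phi) = 1" using phi_sq by (simp add: algebra_simps)
  have "0 \<le> r * (2 - phi)" using assms phi_bounds by simp
  moreover have "r * (2 - phi) \<le> 2 * (2 - phi)" using assms phi_bounds
    by (intro mult_right_mono) auto
  moreover have "2 * (2 - phi) < 1" using phi_bounds by simp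
  ultimately have "(0::real) \<le> of_int n" "of_int n < (2::real)" unfolding n[symmetric]
    using assms(1,2) by linarith+
  then have "n = 0 \<or> n = 1" by linarith
  moreover
  { assume "n = 0"
    then have h: "z' = 0" "r * (2 - phi) = 0" using n \<open>0 \<le> r * (2 - phi)\<close> assms by linarith+
    moreover have "2 - phi \<noteq> 0" using phi_bounds by auto
    ultimately have "r = 0" by simp
    then have ?thesis using h by simp }
  moreover
  { assume "n = 1"
    then have "r * (2 - phi) = 1 - z'" using n by simp
    then have "r = (1 - z') * (phi + 1)" by (rule t7[OF phi_sq])
    then have ?thesis by simp }
  ultimately show ?thesis by blast
qed

lemma Yhit_b1: "y' + ((1 - y') * phi) * (phi - 1) = 1"
  by (rule t5[OF phi_sq])
lemma Yhit_b2: "y' + ((2 - y') * phi) * (phi - 1) = 2"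
  by (rule t5b[OF phi_sq])
lemma Zhit_c: "z' + ((1 - z') * (phi + 1)) * (2 - phi) = 1"
  by (rule t5c[OF phi_sq])

lemma id1: "(1 - z') * (phi + 1) - (1 - y') * phi = phi^2 * ((2 - phi) + y'/phi - z')"
proof -
  have "y'/phi = y' * (phi - 1)" using theta2_eq unfolding theta2_def by (simp add: divide_inverse)
  then show ?thesis using t1[OF phi_sq, of z' y'] by simp
qed
lemma id2: "(1 - z') * (phi + 1) - (2 - y') * phi = phi^2 * ((3 - 2*phi) + y'/phi - z')"
proof -
  have "y'/phi = y' * (phi - 1)" using theta2_eq unfolding theta2_def by (simp add: divide_inverse)
  then show ?thesis using t2[OF phi_sq, of z' y'] by simp
qed
lemma id3: "(2 - y') * phi - 2 = phi * ((4 - 2*phi) - y')"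
  by (rule t3[OF phi_sq])
lemma id4: "(1 - z') * (phi + 1) - 2 = phi^2 * ((2*phi - 3) - z')"
  by (rule t4[OF phi_sq])

lemma sign_iff:
  fixes q d :: real
  assumes "0 < q"
  shows "(0 < q * d) = (0 < d)" "(q * d < 0) = (d < 0)"
  using assms by (auto simp: zero_less_mult_iff mult_less_0_iff)



lemma fin_int_hits:
  fixes x c T :: real assumes c: "0 < c"
  shows "finite {t. 0 \<le> t \<and> t < T \<and> x + t*c \<in> \<int>}"
proof -
  have "{t. 0 \<le> t \<and> t < T \<and> x + t*c \<in> \<int>} \<subseteq> (\<lambda>n. (of_int n - x)/c) ` {\<lfloor>x\<rfloor>..\<lceil>x + T*c\<rceil>}"
  proof
    fix t assume t: "t \<in> {t. 0 \<le> t \<and> t < T \<and> x + t*c \<in> \<int>}"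
    then obtain n where n: "x + t*c = of_int n" by (auto elim: Ints_cases)
    have tc: "0 \<le> t*c" using t c by simp
    have tc2: "t*c \<le> T*c" using t c by (intro mult_right_mono) auto
    have "of_int \<lfloor>x\<rfloor> \<le> x" by simp
    then have "of_int \<lfloor>x\<rfloor> \<le> (of_int n :: real)" using n tc by linarith
    then have n1: "\<lfloor>x\<rfloor> \<le> n" by linarith
    have "x + T*c \<le> of_int \<lceil>x + T*c\<rceil>" by simp
    then have "(of_int n :: real) \<le> of_int \<lceil>x + T*c\<rceil>" using n tc2 by linarith
    then have n2: "n \<le> \<lceil>x + T*c\<rceil>" by linarith
    have "t = (of_int n - x)/c" using n c by (simp add: field_simps)
    then show "t \<in> (\<lambda>n. (of_int n - x)/c) ` {\<lfloor>x\<rfloor>..\<lceil>x + T*c\<rceil>}" using n1 n2 by auto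
  qed
  then show ?thesis by (rule finite_subset) simp
qed

lemma window_set:
  fixes A p q w :: real
  shows "{s. A \<le> s \<and> s < A + 2 \<and> (s - A = 0 \<or> s - A = p \<or> s - A = q \<or> s - A = w)} =
    {A} \<union> (if 0 \<le> p \<and> p < 2 then {A+p} else {}) \<union> (if 0 \<le> q \<and> q < 2 then {A+q} else {})
     \<union> (if 0 \<le> w \<and> w < 2 then {A+w} else {})"
  by (rule set_eqI) (auto split: if_splits)

theorem lemma5:
  fixes y z :: real and k :: nat
  assumes "0 \<le> y" "y < 1" "0 \<le> z" "z < 1"
    and "well_defined_orbit theta0 (0, y, z)"
  shows "return_word (billiard_word theta0 (0, y, z)) a (k + 1) =
         Phi (frac (y + 2 * real k * theta2)) (frac (z - 2 * real k * theta2))"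
proof -
  define m where "m = (0::real, y, z)"
  define H where "H = hit_times theta0 m"
  define N where "N = (\<lambda>t. card {s\<in>H. s<t})"
  define u where "u = billiard_word theta0 m"
  have cX: "\<And>t. coordX theta0 m t = t/2" unfolding coordX_def m_def theta0_def theta1_def by simp
  have cY: "\<And>t. coordY theta0 m t = y + t*(phi-1)"
    unfolding coordY_def m_def theta0_def theta2_eq by simp
  have cZ: "\<And>t. coordZ theta0 m t = z + t*(2-phi)"
    unfolding coordZ_def m_def theta0_def theta3_eq by simp
  have WD: "\<And>t. 0 \<le> t \<Longrightarrow> \<not> (t/2 \<in> \<int> \<and> y + t*(phi-1) \<in> \<int>) \<and> \<not> (t/2 \<in> \<int> \<and> z + t*(2-phi) \<in> \<int>)
     \<and> \<not> (y + t*(phi-1) \<in> \<int> \<and> z + t*(2-phi) \<in> \<int>)"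
    using assms(5) unfolding well_defined_orbit_def m_def[symmetric] cX cY cZ by blast
  have Hmem: "\<And>t. t \<in> H \<longleftrightarrow> 0 \<le> t \<and> (t/2 \<in> \<int> \<or> y + t*(phi-1) \<in> \<int> \<or> z + t*(2-phi) \<in> \<int>)"
    unfolding H_def hit_times_def cX cY cZ by simp
  have lett: "\<And>t. letter_at theta0 m t = (if t/2 \<in> \<int> then a else if y + t*(phi-1) \<in> \<int> then b else c)"
    unfolding letter_at_def cX cY by simp
  have fin: "\<And>T. finite {s\<in>H. s<T}"
  proof -
    fix T
    have "{s\<in>H. s<T} \<subseteq> {t. 0\<le>t \<and> t<T \<and> 0 + t*(1/2) \<in> \<int>} \<union> {t. 0\<le>t \<and> t<T \<and> y + t*(phi-1) \<in> \<int>}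
       \<union> {t. 0\<le>t \<and> t<T \<and> z + t*(2-phi) \<in> \<int>}"
      using Hmem by auto
    moreover have "finite ({t. 0\<le>t \<and> t<T \<and> 0 + t*(1/2) \<in> \<int>} \<union> {t. 0\<le>t \<and> t<T \<and> y + t*(phi-1) \<in> \<int>}
       \<union> {t. 0\<le>t \<and> t<T \<and> z + t*(2-phi) \<in> \<int>})"
      using fin_int_hits[of "1/2" T 0] fin_int_hits[of "phi-1" T y] fin_int_hits[of "2-phi" T z] phi_bounds
      by simp
    ultimately show "finite {s\<in>H. s<T}" by (rule finite_subset)
  qed
  have nn: "\<And>t. t\<in>H \<Longrightarrow> 0 \<le> t" using Hmem by simp
  have H2: "\<And>j::nat. 2 * real j \<in> H" using Hmem by simp
  have z0: "0 \<in> H" using H2[of 0] by simp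
  have unb: "\<And>t. \<exists>t'\<in>H. t < t'"
  proof -
    fix t :: real
    obtain j :: nat where "t < real j" using reals_Archimedean2 by blast
    then have "t < 2 * real j" by simp
    then show "\<exists>t'\<in>H. t < t'" using H2[of j] by blast
  qed
  have surj: "\<And>n. \<exists>t\<in>H. N t = n" unfolding N_def using hit_surj[OF fin nn z0 unb] .
  have uN: "\<And>t. t \<in> H \<Longrightarrow> u (N t) = letter_at theta0 m t"
    unfolding u_def billiard_word_def nth_hit_def N_def H_def[symmetric] using the_hit[OF fin] by simp
  have Nlt: "\<And>t t'. t \<in> H \<Longrightarrow> t < t' \<Longrightarrow> N t < N t'"
    unfolding N_def using card_lt_mono[OF fin] by blast
  have Nle: "\<And>t t'. t \<le> t' \<Longrightarrow> N t \<le> N t'"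
    unfolding N_def using card_le_mono'[OF fin] by blast
  have atime: "\<And>t. t \<in> H \<Longrightarrow> u (N t) = a \<Longrightarrow> \<exists>i::nat. t = 2 * real i"
  proof -
    fix t assume t: "t \<in> H" "u (N t) = a"
    then have "t/2 \<in> \<int>" using uN[of t] lett[of t] by (auto split: if_splits)
    then obtain n where n: "t/2 = of_int n" by (auto elim: Ints_cases)
    have "0 \<le> n" using n nn[OF t(1)] by linarith
    then have "t = 2 * real (nat n)" using n by simp
    then show "\<exists>i::nat. t = 2 * real i" by blast
  qed
  have uH2: "\<And>i::nat. u (N (2 * real i)) = a" using uN[OF H2] lett by simp
  have set_eq: "\<And>j::nat. {q. q < N (2 * real j) \<and> u q = a} = (\<lambda>i. N (2 * real i)) ` {..<j}"
  proof (intro equalityI subsetI)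
    fix j :: nat and q assume q: "q \<in> {q. q < N (2*real j) \<and> u q = a}"
    obtain t where t: "t \<in> H" "N t = q" using surj by blast
    obtain i :: nat where i: "t = 2 * real i" using atime t q by blast
    have "i < j"
    proof (rule ccontr)
      assume "\<not> i < j" then have "2*real j \<le> t" using i by simp
      then have "N (2*real j) \<le> N t" using Nle by blast
      then show False using q t by simp
    qed
    then show "q \<in> (\<lambda>i. N (2*real i)) ` {..<j}" using i t by auto
  next
    fix j :: nat and q assume "q \<in> (\<lambda>i. N (2*real i)) ` {..<j}"
    then obtain i where i: "i < j" "q = N (2*real i)" by auto
    have "N (2*real i) < N (2*real j)" using Nlt[OF H2] i(1) by simp
    then show "q \<in> {q. q < N (2*real j) \<and> u q = a}" using i uH2 by simp
  qed
  have inj: "\<And>j. inj_on (\<lambda>i::nat. N (2 * real i)) {..<j}"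
  proof (rule inj_onI)
    fix j i1 i2 assume "N (2 * real i1) = N (2 * real (i2::nat))"
    then show "i1 = i2" using Nlt[OF H2, of i1 "2 * real i2"] Nlt[OF H2, of i2 "2 * real i1"]
      by (metis less_irrefl linorder_neqE_nat of_nat_less_iff mult_less_cancel_left_pos zero_less_numeral)
  qed
  have card_eq: "\<And>j. card {q. q < N (2 * real j) \<and> u q = a} = j"
    unfolding set_eq using card_image[OF inj] by simp
  have occ_eq: "\<And>j. occ u a j = N (2 * real j)"
  proof -
    fix j :: nat
    show "occ u a j = N (2*real j)"
      unfolding occ_def
    proof (rule the_equality)
      show "u (N (2*real j)) = a \<and> card {q. q < N (2*real j) \<and> u q = a} = j"
        using uH2 card_eq by simp
    next
      fix p assume p: "u p = a \<and> card {q. q < p \<and> u q = a} = j"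
      obtain t where t: "t\<in>H" "N t = p" using surj by blast
      obtain i :: nat where i: "t = 2 * real i" using atime t p by blast
      have "i = j" using card_eq[of i] p t i by simp
      then show "p = N (2*real j)" using t i by simp
    qed
  qed
  define A where "A = 2 * real k"
  define B where "B = 2 * real (k + 1)"
  have AB: "A \<le> B" "0 \<le> A" unfolding A_def B_def by auto
  have Bd: "B = A + 2" unfolding A_def B_def by simp
  have rw: "return_word u a (k + 1) = map u [N A..<N B]"
    unfolding return_word_def occ_eq A_def B_def by simp
  have final: "\<And>ts. sorted_wrt (<) ts \<Longrightarrow> set ts = {s\<in>H. A \<le> s \<and> s < B} \<Longrightarrow>
      map u [N A..<N B] = map (letter_at theta0 m) ts"
  proof -
    fix ts :: "real list"
    assume so: "sorted_wrt (<) ts" and st: "set ts = {s\<in>H. A \<le> s \<and> s < B}"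
    have NB: "N B = N A + length ts" unfolding N_def using hit_segment(1)[OF fin AB(1) so st] .
    have Ni: "\<And>i. i < length ts \<Longrightarrow> N (ts!i) = N A + i"
      unfolding N_def using hit_segment(2)[OF fin AB(1) so st] by blast
    show "map u [N A..<N B] = map (letter_at theta0 m) ts"
    proof (rule nth_equalityI)
      show "length (map u [N A..<N B]) = length (map (letter_at theta0 m) ts)" using NB by simp
    next
      fix i assume "i < length (map u [N A..<N B])"
      then have i: "i < length ts" using NB by simp
      have "ts!i \<in> H" using st i nth_mem[OF i] by auto
      then have "u (N (ts!i)) = letter_at theta0 m (ts!i)" by (rule uN)
      then show "map u [N A..<N B] ! i = map (letter_at theta0 m) ts ! i"
        using i NB Ni[OF i] by simp
    qed
  qed

  define y' where "y' = frac (y + 2 * real k * theta2)"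
  define z' where "z' = frac (z - 2 * real k * theta2)"
  define rb1 where "rb1 = (1 - y') * phi"
  define rb2 where "rb2 = (2 - y') * phi"
  define rc where "rc = (1 - z') * (phi + 1)"
  have y'b: "0 \<le> y'" "y' < 1" unfolding y'_def by (auto simp: frac_lt_1)
  have z'b: "0 \<le> z'" "z' < 1" unfolding z'_def by (auto simp: frac_lt_1)
  have Yrel: "\<And>r. (y + (A + r)*(phi-1) \<in> \<int>) = (y' + r*(phi-1) \<in> \<int>)"
  proof -
    fix r
    have "y + (A + r)*(phi-1) = of_int \<lfloor>y + 2 * real k * theta2\<rfloor> + (y' + r*(phi-1))"
      unfolding y'_def frac_def A_def theta2_eq by (simp add: algebra_simps)
    then show "(y + (A + r)*(phi-1) \<in> \<int>) = (y' + r*(phi-1) \<in> \<int>)" by (simp add: Ints_add_int_iff)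
  qed
  have Zrel: "\<And>r. (z + (A + r)*(2-phi) \<in> \<int>) = (z' + r*(2-phi) \<in> \<int>)"
  proof -
    fix r
    have "z + (A + r)*(2-phi) = of_int (\<lfloor>z - 2 * real k * theta2\<rfloor> + 2 * int k) + (z' + r*(2-phi))"
      unfolding z'_def frac_def A_def theta2_eq by (simp add: algebra_simps)
    then show "(z + (A + r)*(2-phi) \<in> \<int>) = (z' + r*(2-phi) \<in> \<int>)" by (simp add: Ints_add_int_iff)
  qed
  have Xrel: "\<And>r. ((A + r)/2 \<in> \<int>) = (r/2 \<in> \<int>)"
  proof -
    fix r
    have "(A + r)/2 = of_int (int k) + r/2" unfolding A_def by simp
    then show "((A + r)/2 \<in> \<int>) = (r/2 \<in> \<int>)" by (simp only: Ints_add_int_iff)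
  qed
  have Xnot: "\<And>r::real. 0 < r \<Longrightarrow> r < 2 \<Longrightarrow> \<not> r/2 \<in> \<int>"
  proof -
    fix r :: real assume r: "0 < r" "r < 2"
    show "\<not> r/2 \<in> \<int>"
    proof
    assume "r/2 \<in> \<int>"
    then obtain n where n: "r/2 = of_int n" by (auto elim: Ints_cases)
    have "(0::real) < of_int n" "of_int n < (1::real)" using n r by linarith+
    then have "0 < n" "n < 1" by simp_all
    then show False by linarith
    qed
  qed
  have y'nz: "y' \<noteq> 0"
  proof
    assume "y' = 0"
    then have "y + (A + 0)*(phi-1) \<in> \<int>" "(A + 0)/2 \<in> \<int>" using Yrel[of 0] Xrel[of 0] by simp_all
    then show False using WD[of A] AB by simp
  qed
  have z'nz: "z' \<noteq> 0"
  proof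
    assume "z' = 0"
    then have "z + (A + 0)*(2-phi) \<in> \<int>" "(A + 0)/2 \<in> \<int>" using Zrel[of 0] Xrel[of 0] by simp_all
    then show False using WD[of A] AB by simp
  qed
  have Yb1: "y + (A + rb1)*(phi-1) \<in> \<int>" unfolding Yrel rb1_def Yhit_b1 by simp
  have Yb2: "y + (A + rb2)*(phi-1) \<in> \<int>" unfolding Yrel rb2_def Yhit_b2 by simp
  have Zc: "z + (A + rc)*(2-phi) \<in> \<int>" unfolding Zrel rc_def Zhit_c by simp
  have rb1p: "0 < rb1" "rb1 < 2"
  proof -
    have "0 < 1 - y'" using y'b by simp
    then show "0 < rb1" unfolding rb1_def using phi_pos by simp
    have "(1 - y') * phi \<le> 1 * phi" using y'b phi_pos by (intro mult_right_mono) auto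
    then show "rb1 < 2" unfolding rb1_def using phi_bounds by linarith
  qed
  have rb12: "rb2 = rb1 + phi" unfolding rb1_def rb2_def by (simp add: algebra_simps)
  have rcp: "0 < rc"
  proof -
    have "0 < 1 - z'" using z'b by simp
    then show "0 < rc" unfolding rc_def using phi_pos by simp
  qed
  have rb2n2: "rb2 \<noteq> 2"
  proof
    assume h: "rb2 = 2"
    have "(A + rb2)/2 \<in> \<int>" unfolding Xrel h by simp
    then show False using WD[of "A + rb2"] Yb2 AB rb1p rb12 phi_bounds by simp
  qed
  have rcn2: "rc \<noteq> 2"
  proof
    assume h: "rc = 2"
    have "(A + rc)/2 \<in> \<int>" unfolding Xrel h by simp
    then show False using WD[of "A + rc"] Zc AB rcp by simp
  qed
  have rcnb1: "rc \<noteq> rb1"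
  proof
    assume h: "rc = rb1"
    then show False using WD[of "A + rc"] Zc Yb1 AB rcp by simp
  qed
  have rcnb2: "rc \<noteq> rb2"
  proof
    assume h: "rc = rb2"
    then show False using WD[of "A + rc"] Zc Yb2 AB rcp by simp
  qed
  have Wset: "{s\<in>H. A \<le> s \<and> s < B} = {s. A \<le> s \<and> s < B \<and> (s - A = 0 \<or> s - A = rb1 \<or> s - A = rb2 \<or> s - A = rc)}"
  proof (intro equalityI subsetI)
    fix s assume s: "s \<in> {s\<in>H. A \<le> s \<and> s < B}"
    define r where "r = s - A"
    have sr: "s = A + r" unfolding r_def by simp
    have r: "0 \<le> r" "r < 2" using s Bd unfolding r_def by auto
    have "(A + r)/2 \<in> \<int> \<or> y + (A + r)*(phi-1) \<in> \<int> \<or> z + (A + r)*(2-phi) \<in> \<int>"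
      using s Hmem unfolding sr by auto
    then have "r/2 \<in> \<int> \<or> y' + r*(phi-1) \<in> \<int> \<or> z' + r*(2-phi) \<in> \<int>"
      unfolding Xrel Yrel Zrel .
    moreover have "r/2 \<in> \<int> \<Longrightarrow> r = 0" using Xnot[of r] r by fastforce
    moreover have "y' + r*(phi-1) \<in> \<int> \<Longrightarrow> r = 0 \<or> r = rb1 \<or> r = rb2"
      using Yhit[OF y'b r] unfolding rb1_def rb2_def by blast
    moreover have "z' + r*(2-phi) \<in> \<int> \<Longrightarrow> r = 0 \<or> r = rc"
      using Zhit[OF z'b r] unfolding rc_def by blast
    ultimately show "s \<in> {s. A \<le> s \<and> s < B \<and> (s - A = 0 \<or> s - A = rb1 \<or> s - A = rb2 \<or> s - A = rc)}"
      using s unfolding r_def by blast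
  next
    fix s assume s: "s \<in> {s. A \<le> s \<and> s < B \<and> (s - A = 0 \<or> s - A = rb1 \<or> s - A = rb2 \<or> s - A = rc)}"
    define r where "r = s - A"
    have sr: "s = A + r" unfolding r_def by simp
    have "(A + r)/2 \<in> \<int> \<or> y + (A + r)*(phi-1) \<in> \<int> \<or> z + (A + r)*(2-phi) \<in> \<int>"
    proof -
      have "r = 0 \<or> r = rb1 \<or> r = rb2 \<or> r = rc" using s unfolding r_def by auto
      moreover have "(A + 0)/2 \<in> \<int>" unfolding Xrel by simp
      ultimately show ?thesis using Yb1 Yb2 Zc by auto
    qed
    then show "s \<in> {s\<in>H. A \<le> s \<and> s < B}" using s AB Hmem unfolding sr by auto
  qed
  have final2: "\<And>ts. sorted_wrt (<) ts \<Longrightarrow> set ts = {s. A \<le> s \<and> s < A + 2 \<and> (s - A = 0 \<or> s - A = rb1 \<or> s - A = rb2 \<or> s - A = rc)} \<Longrightarrow>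
      map u [N A..<N B] = map (letter_at theta0 m) ts"
  proof -
    fix ts :: "real list"
    assume h: "sorted_wrt (<) ts" "set ts = {s. A \<le> s \<and> s < A + 2 \<and> (s - A = 0 \<or> s - A = rb1 \<or> s - A = rb2 \<or> s - A = rc)}"
    have "set ts = {s\<in>H. A \<le> s \<and> s < B}" by (subst Wset) (simp only: h(2) Bd)
    then show "map u [N A..<N B] = map (letter_at theta0 m) ts"
      by (rule final[OF h(1)])
  qed
  have LA: "letter_at theta0 m A = a"
  proof -
    have "(A + 0)/2 \<in> \<int>" unfolding Xrel by simp
    then show ?thesis using lett by simp
  qed
  have Lb1: "letter_at theta0 m (A + rb1) = b"
    using lett[of "A + rb1"] Xrel[of rb1] Xnot[of rb1] rb1p Yb1 by simp
  have Lb2: "rb2 < 2 \<Longrightarrow> letter_at theta0 m (A + rb2) = b"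
    using lett[of "A + rb2"] Xrel[of rb2] Xnot[of rb2] rb1p rb12 phi_bounds Yb2 by simp
  have Lc: "rc < 2 \<Longrightarrow> letter_at theta0 m (A + rc) = c"
  proof -
    assume rc2: "rc < 2"
    have "\<not> y' + rc*(phi-1) \<in> \<int>"
      using Yhit[OF y'b _ rc2] rcp y'nz rcnb1 rcnb2 unfolding rb1_def rb2_def by auto
    then show ?thesis using lett[of "A + rc"] Xrel[of rc] Xnot[of rc] rcp rc2 Yrel[of rc] by simp
  qed
  have c1: "(y' < 4 - 2*phi) = (2 < rb2)" "(y' > 4 - 2*phi) = (rb2 < 2)"
  proof -
    have e: "rb2 - 2 = phi * ((4 - 2*phi) - y')" unfolding rb2_def by (rule id3)
    show "(y' < 4 - 2*phi) = (2 < rb2)" using sign_iff(1)[OF phi_pos, of "(4 - 2*phi) - y'"] e by auto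
    show "(y' > 4 - 2*phi) = (rb2 < 2)" using sign_iff(2)[OF phi_pos, of "(4 - 2*phi) - y'"] e by auto
  qed
  have php: "0 < phi^2" using phi_pos by simp
  have c2: "(z' < 2*phi - 3) = (2 < rc)" "(2*phi - 3 < z') = (rc < 2)"
  proof -
    have e: "rc - 2 = phi^2 * ((2*phi - 3) - z')" unfolding rc_def by (rule id4)
    show "(z' < 2*phi - 3) = (2 < rc)" using sign_iff(1)[OF php, of "(2*phi - 3) - z'"] e by auto
    show "(2*phi - 3 < z') = (rc < 2)" using sign_iff(2)[OF php, of "(2*phi - 3) - z'"] e by auto
  qed
  have c3: "(z' < (2 - phi) + y'/phi) = (rb1 < rc)" "(z' > (2 - phi) + y'/phi) = (rc < rb1)"
  proof -
    have e: "rc - rb1 = phi^2 * ((2 - phi) + y'/phi - z')" unfolding rc_def rb1_def by (rule id1)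
    show "(z' < (2 - phi) + y'/phi) = (rb1 < rc)" using sign_iff(1)[OF php, of "(2 - phi) + y'/phi - z'"] e by auto
    show "(z' > (2 - phi) + y'/phi) = (rc < rb1)" using sign_iff(2)[OF php, of "(2 - phi) + y'/phi - z'"] e by auto
  qed
  have c4: "(z' < (3 - 2*phi) + y'/phi) = (rb2 < rc)" "((3 - 2*phi) + y'/phi < z') = (rc < rb2)"
  proof -
    have e: "rc - rb2 = phi^2 * ((3 - 2*phi) + y'/phi - z')" unfolding rc_def rb2_def by (rule id2)
    show "(z' < (3 - 2*phi) + y'/phi) = (rb2 < rc)" using sign_iff(1)[OF php, of "(3 - 2*phi) + y'/phi - z'"] e by auto
    show "((3 - 2*phi) + y'/phi < z') = (rc < rb2)" using sign_iff(2)[OF php, of "(3 - 2*phi) + y'/phi - z'"] e by auto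
  qed
  have PhiE: "Phi y' z' =
    (if 2 < rb2 \<and> 2 < rc then [a,b]
     else if rb2 < 2 \<and> 2 < rc then [a,b,b]
     else if 2 < rb2 \<and> rc < 2 \<and> rb1 < rc then [a,b,c]
     else if 2 < rb2 \<and> rc < rb1 then [a,c,b]
     else if rb2 < 2 \<and> rc < 2 \<and> rb2 < rc then [a,b,b,c]
     else if rb2 < 2 \<and> rb1 < rc \<and> rc < rb2 then [a,b,c,b]
     else if rb2 < 2 \<and> rc < rb1 then [a,c,b,b]
     else [])"
    unfolding Phi_def c1 c2 c3 c4 by simp
  have goal: "map u [N A..<N B] = Phi y' z'"
  proof -

    consider "2 < rb2" "2 < rc" | "rb2 < 2" "2 < rc" | "2 < rb2" "rc < 2" "rb1 < rc"
      | "2 < rb2" "rc < rb1" | "rb2 < 2" "rc < 2" "rb2 < rc" | "rb2 < 2" "rb1 < rc" "rc < rb2"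
      | "rb2 < 2" "rc < rb1"
      using rb2n2 rcn2 rcnb1 rcnb2 rb12 phi_bounds rb1p by fastforce
    then show ?thesis
    proof cases
      case 1
      have "map u [N A..<N B] = map (letter_at theta0 m) [A, A + rb1]"
        apply (rule final2)
         apply (use 1 rb1p rb12 phi_bounds in simp)
        unfolding window_set by (use 1 rb1p rb12 phi_bounds in auto)
      then show ?thesis using 1 LA Lb1 unfolding PhiE by simp
    next
      case 2
      have "map u [N A..<N B] = map (letter_at theta0 m) [A, A + rb1, A + rb2]"
        apply (rule final2)
         apply (use 2 rb1p rb12 phi_bounds in simp)
        unfolding window_set by (use 2 rb1p rb12 phi_bounds in auto)
      then show ?thesis using 2 LA Lb1 Lb2 unfolding PhiE by simp
    next
      case 3
      have "map u [N A..<N B] = map (letter_at theta0 m) [A, A + rb1, A + rc]"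
        apply (rule final2)
         apply (use 3 rb1p rb12 phi_bounds in simp)
        unfolding window_set by (use 3 rb1p rb12 phi_bounds in auto)
      then show ?thesis using 3 LA Lb1 Lc unfolding PhiE by simp
    next
      case 4
      have "map u [N A..<N B] = map (letter_at theta0 m) [A, A + rc, A + rb1]"
        apply (rule final2)
         apply (use 4 rcp rb1p rb12 phi_bounds in simp)
        unfolding window_set by (use 4 rcp rb1p rb12 phi_bounds in auto)
      then show ?thesis using 4 LA Lb1 Lc rb1p unfolding PhiE by simp
    next
      case 5
      have "map u [N A..<N B] = map (letter_at theta0 m) [A, A + rb1, A + rb2, A + rc]"
        apply (rule final2)
         apply (use 5 rb1p rb12 phi_bounds in simp)
        unfolding window_set by (use 5 rb1p rb12 phi_bounds in auto)
      then show ?thesis using 5 LA Lb1 Lb2 Lc unfolding PhiE by simp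
    next
      case 6
      have "map u [N A..<N B] = map (letter_at theta0 m) [A, A + rb1, A + rc, A + rb2]"
        apply (rule final2)
         apply (use 6 rb1p rb12 phi_bounds in simp)
        unfolding window_set by (use 6 rb1p rb12 phi_bounds in auto)
      then show ?thesis using 6 LA Lb1 Lb2 Lc unfolding PhiE by simp
    next
      case 7
      have "map u [N A..<N B] = map (letter_at theta0 m) [A, A + rc, A + rb1, A + rb2]"
        apply (rule final2)
         apply (use 7 rcp rb1p rb12 phi_bounds in simp)
        unfolding window_set by (use 7 rcp rb1p rb12 phi_bounds in auto)
      then show ?thesis using 7 LA Lb1 Lb2 Lc rb1p rb12 phi_bounds unfolding PhiE by simp
    qed
  qed
  have R: "return_word u a (k + 1) = Phi y' z'" by (simp only: rw goal)
  show ?thesis using R unfolding u_def m_def y'_def z'_def .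
qed

end
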